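(* Let $m\geq\beta\geq 1$ be integers and let $G^*$ be a graph with maximum $q$ among all graphs in $\mathfrak{G}_{m,\geq\beta}$. Let $X^*$ be a principal eigenvector of $Q(G^* )$ with coordinates $x^*_v$, let $M^*(G^* )$ be a matching of $G^*$ extremal to $X^*$, and let $u_1v_1,u_2v_2,\ldots,u_kv_k$ ($k=\beta(G^* )$) be an ordering of $M^*(G^* )$ proper to $X^*$. Suppose $\beta(G^* )\geq 2$ and let $i,j\in\{1,\ldots,k\}$ with $i<j$. Then $x^*_{u_i}\geq x^*_{v_j}$ if and only if the subgraph of $G^*$ induced by $\{u_i,v_i,u_j,v_j\}$ is either two disjoint edges ($2K_2$) or a complete graph $K_4$.
   Context: All graphs are finite, simple and undirected (isolated vertices allowed). $Q(G)=D(G)+A(G)$ is the signless Laplacian matrix and $q(G)$ its largest eigenvalue; a principal eigenvector of $Q(G)$ is a nonnegative unit vector $X$ with $Q(G)X=q(G)X$. $\beta(G)$ is the matching number. $\mathfrak{G}_{m,\geq\beta}$ is the set of graphs with exactly $m$ edges and matching number at least $\beta$. For a graph $G$ with at least one edge and a principal eigenvector $X$ (coordinates $x_v$), a matching $M^*(G)$ is extremal to $X$ if it is a maximum matching and $\sum_{uv\in M^*(G)}(x_u+x_v)^2=\max_M\sum_{uv\in M}(x_u+x_v)^2$ over all maximum matchings $M$. An ordering $u_1v_1,\ldots,u_kv_k$ of the edges of $M^*(G^* )$ (with a designated labelling of the endpoints of each edge) is proper to $X^*$ if for each $i$: (i) $x^*_{v_i}\geq x^*_{u_i}$; (ii) $x^*_{v_i}\geq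 x^*_{v_{i+1}}$ (for $i<k$); (iii) $x^*_{u_i}\geq x^*_{u_{i+1}}$ whenever $x^*_{v_i}=x^*_{v_{i+1}}$ (for $i<k$). *)

theory Defs
  imports Complex_Main
begin

definition graph :: "'a set \<Rightarrow> 'a set set \<Rightarrow> bool" where
  "graph V E \<longleftrightarrow> finite V \<and> (\<forall>e\<in>E. e \<subseteq> V \<and> card e = 2)"

definition degree :: "'a set set \<Rightarrow> 'a \<Rightarrow> nat" where
  "degree E v = card {e\<in>E. v \<in> e}"

definition neighbours :: "'a set set \<Rightarrow> 'a \<Rightarrow> 'a set" where
  "neighbours E v = {w. {v, w} \<in> E}"

text \<open>Action of the signless Laplacian Q(G) = D(G) + A(G) on a vector X (indexed by V).\<close>
definition Qmul :: "'a set set \<Rightarrow> ('a \<Rightarrow> real) \<Rightarrow> 'a \<Rightarrow> real" where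
  "Qmul E X v = real (degree E v) * X v + (\<Sum>w\<in>neighbours E v. X w)"

definition is_Q_eigvec :: "'a set \<Rightarrow> 'a set set \<Rightarrow> real \<Rightarrow> ('a \<Rightarrow> real) \<Rightarrow> bool" where
  "is_Q_eigvec V E lam X \<longleftrightarrow> (\<forall>v. v \<notin> V \<longrightarrow> X v = 0) \<and> (\<exists>v\<in>V. X v \<noteq> 0)
      \<and> (\<forall>v\<in>V. Qmul E X v = lam * X v)"

definition Q_eigenvalues :: "'a set \<Rightarrow> 'a set set \<Rightarrow> real set" where
  "Q_eigenvalues V E = {lam. \<exists>X. is_Q_eigvec V E lam X}"

definition qQ :: "'a set \<Rightarrow> 'a set set \<Rightarrow> real" where
  "qQ V E = Max (Q_eigenvalues V E)"

definition principal_eigvec :: "'a set \<Rightarrow> 'a set set \<Rightarrow> ('a \<Rightarrow> real) \<Rightarrow> bool" where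
  "principal_eigvec V E X \<longleftrightarrow> is_Q_eigvec V E (qQ V E) X \<and> (\<forall>v\<in>V. X v \<ge> 0)
      \<and> (\<Sum>v\<in>V. (X v)\<^sup>2) = 1"

definition matching :: "'a set set \<Rightarrow> 'a set set \<Rightarrow> bool" where
  "matching E M \<longleftrightarrow> M \<subseteq> E \<and> (\<forall>e1\<in>M. \<forall>e2\<in>M. e1 \<noteq> e2 \<longrightarrow> e1 \<inter> e2 = {})"

definition matching_number :: "'a set set \<Rightarrow> nat" where
  "matching_number E = Max {card M | M. matching E M}"

definition maximum_matching :: "'a set set \<Rightarrow> 'a set set \<Rightarrow> bool" where
  "maximum_matching E M \<longleftrightarrow> matching E M \<and> card M = matching_number E"

definition match_weight :: "('a \<Rightarrow> real) \<Rightarrow> 'a set set \<Rightarrow> real" where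
  "match_weight X M = (\<Sum>e\<in>M. (\<Sum>w\<in>e. X w)\<^sup>2)"

definition extremal_matching :: "'a set set \<Rightarrow> ('a \<Rightarrow> real) \<Rightarrow> 'a set set \<Rightarrow> bool" where
  "extremal_matching E X M \<longleftrightarrow> maximum_matching E M
      \<and> (\<forall>M'. maximum_matching E M' \<longrightarrow> match_weight X M' \<le> match_weight X M)"

definition proper_ordering ::
  "'a set set \<Rightarrow> ('a \<Rightarrow> real) \<Rightarrow> nat \<Rightarrow> (nat \<Rightarrow> 'a) \<Rightarrow> (nat \<Rightarrow> 'a) \<Rightarrow> bool" where
  "proper_ordering M X k u v \<longleftrightarrow>
     k = card M \<and> M = {{u i, v i} | i. i \<in> {1..k}} \<and>
     (\<forall>i\<in>{1..k}. X (v i) \<ge> X (u i)) \<and>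
     (\<forall>i\<in>{1..<k}. X (v i) \<ge> X (v (Suc i))) \<and>
     (\<forall>i\<in>{1..<k}. X (v i) = X (v (Suc i)) \<longrightarrow> X (u i) \<ge> X (u (Suc i)))"

text \<open>Since q is
invariant under isomorphism, competitors range over graphs on the vertex type nat
(every finite graph is isomorphic to one of these).\<close>
definition in_family :: "nat \<Rightarrow> nat \<Rightarrow> 'a set \<Rightarrow> 'a set set \<Rightarrow> bool" where
  "in_family m \<beta> V E \<longleftrightarrow> graph V E \<and> card E = m \<and> matching_number E \<ge> \<beta>"

definition q_extremal :: "nat \<Rightarrow> nat \<Rightarrow> 'a set \<Rightarrow> 'a set set \<Rightarrow> bool" where
  "q_extremal m \<beta> V E \<longleftrightarrow> in_family m \<beta> V E \<and>
     (\<forall>(V' :: nat set) E'. in_family m \<beta> V' E' \<longrightarrow> qQ V' E' \<le> qQ V E)"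

definition induced_edges :: "'a set set \<Rightarrow> 'a set \<Rightarrow> 'a set set" where
  "induced_edges E S = {e\<in>E. e \<subseteq> S}"

definition induced_is_2K2 :: "'a set set \<Rightarrow> 'a set \<Rightarrow> bool" where
  "induced_is_2K2 E S \<longleftrightarrow> card S = 4 \<and>
     (\<exists>e1 e2. induced_edges E S = {e1, e2} \<and> e1 \<noteq> e2 \<and> e1 \<inter> e2 = {})"

definition induced_is_K4 :: "'a set set \<Rightarrow> 'a set \<Rightarrow> bool" where
  "induced_is_K4 E S \<longleftrightarrow> card S = 4 \<and> induced_edges E S = {e. e \<subseteq> S \<and> card e = 2}"

end

theory Submission imports Defs "HOL-Analysis.Analysis" begin

definition esum :: "('a \<Rightarrow> real) \<Rightarrow> 'a set \<Rightarrow> real" where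
  "esum X e = (\<Sum>w\<in>e. X w)"
definition quad :: "'a set set \<Rightarrow> ('a \<Rightarrow> real) \<Rightarrow> real" where
  "quad E X = (\<Sum>e\<in>E. (esum X e)\<^sup>2)"
definition quadB :: "'a set set \<Rightarrow> ('a \<Rightarrow> real) \<Rightarrow> ('a \<Rightarrow> real) \<Rightarrow> real" where
  "quadB E Y Z = (\<Sum>e\<in>E. esum Y e * esum Z e)"
definition QE :: "'a set set \<Rightarrow> ('a \<Rightarrow> real) \<Rightarrow> 'a \<Rightarrow> real" where
  "QE E X v = (\<Sum>e\<in>{e\<in>E. v \<in> e}. esum X e)"
definition nsq :: "'a set \<Rightarrow> ('a \<Rightarrow> real) \<Rightarrow> real" where
  "nsq V Z = (\<Sum>v\<in>V. (Z v)\<^sup>2)"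

lemma card2_eq: "card e = 2 \<Longrightarrow> \<exists>x y. x \<noteq> y \<and> e = {x, y}"
  by (metis card_2_iff)

lemma graph_finite_E: "graph V E \<Longrightarrow> finite E"
  unfolding graph_def by (meson finite_Pow_iff finite_subset PowI subsetI)

lemma graph_edge: "graph V E \<Longrightarrow> e \<in> E \<Longrightarrow> e \<subseteq> V \<and> card e = 2"
  unfolding graph_def by auto

lemma Qmul_QE:
  assumes g: "graph V E"
  shows "Qmul E X v = QE E X v"
proof -
  have fE: "finite E" using g graph_finite_E by blast
  let ?A = "{e\<in>E. v \<in> e}"
  have bij: "bij_betw (\<lambda>w. {v, w}) (neighbours E v) ?A"
  proof (rule bij_betwI')
    fix x y assume "x \<in> neighbours E v" "y \<in> neighbours E v"
    then show "({v, x} = {v, y}) = (x = y)" by (metis doubleton_eq_iff)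
  next
    fix x assume "x \<in> neighbours E v" then show "{v, x} \<in> ?A" by (auto simp: neighbours_def)
  next
    fix e assume "e \<in> ?A"
    then have "e \<in> E" "v \<in> e" by auto
    then obtain a b where ab: "a \<noteq> b" "e = {a, b}" using card2_eq graph_edge[OF g] by blast
    then show "\<exists>x\<in>neighbours E v. e = {v, x}"
      using \<open>v \<in> e\<close> \<open>e \<in> E\<close> by (auto simp: neighbours_def insert_commute)
  qed
  have vn: "v \<notin> neighbours E v"
  proof
    assume "v \<in> neighbours E v"
    then have "{v} \<in> E" by (simp add: neighbours_def)
    then show False using graph_edge[OF g] by fastforce
  qed
  have fA: "finite ?A" using fE by simp
  have fN: "finite (neighbours E v)" using bij fA bij_betw_finite by blast
  have "QE E X v = (\<Sum>w\<in>neighbours E v. esum X {v, w})"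
    unfolding QE_def using sum.reindex_bij_betw[OF bij, of "esum X"] by simp
  also have "\<dots> = (\<Sum>w\<in>neighbours E v. X v + X w)"
  proof (rule sum.cong)
    fix x assume "x \<in> neighbours E v"
    then have "x \<noteq> v" using vn by auto
    then show "esum X {v, x} = X v + X x" by (simp add: esum_def)
  qed simp
  also have "\<dots> = real (card (neighbours E v)) * X v + (\<Sum>w\<in>neighbours E v. X w)"
    by (simp add: sum.distrib)
  also have "card (neighbours E v) = Defs.degree E v"
    unfolding Defs.degree_def using bij_betw_same_card[OF bij] by simp
  finally show ?thesis unfolding Qmul_def by simp
qed

lemma inner_QE:
  assumes g: "graph V E"
  shows "(\<Sum>v\<in>V. Y v * QE E Z v) = quadB E Y Z"
proof -
  have fE: "finite E" using g graph_finite_E by blast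
  have fV: "finite V" using g graph_def by blast
  have "(\<Sum>v\<in>V. Y v * QE E Z v) = (\<Sum>v\<in>V. \<Sum>e\<in>{e\<in>E. v \<in> e}. Y v * esum Z e)"
    unfolding QE_def by (simp add: sum_distrib_left)
  also have "\<dots> = (\<Sum>e\<in>E. \<Sum>v\<in>{v\<in>V. v \<in> e}. Y v * esum Z e)"
    by (rule sum.swap_restrict[OF fV fE])
  also have "\<dots> = (\<Sum>e\<in>E. \<Sum>v\<in>e. Y v * esum Z e)"
  proof (rule sum.cong)
    fix e assume "e \<in> E"
    then have "{v\<in>V. v \<in> e} = e" using graph_edge[OF g] by blast
    then show "(\<Sum>v\<in>{v\<in>V. v \<in> e}. Y v * esum Z e) = (\<Sum>v\<in>e. Y v * esum Z e)" by simp
  qed simp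
  also have "\<dots> = quadB E Y Z"
    unfolding quadB_def esum_def by (simp add: sum_distrib_right)
  finally show ?thesis .
qed

lemma quad_quadB: "quad E X = quadB E X X"
  unfolding quad_def quadB_def by (simp add: power2_eq_square)

lemma edge_finite: "graph V E \<Longrightarrow> e \<in> E \<Longrightarrow> finite e"
  using graph_edge by (metis card.infinite zero_neq_numeral)

lemma quad_cong: assumes g: "graph V E" and "\<And>w. w \<in> V \<Longrightarrow> Y w = Y' w"
  shows "quad E Y = quad E Y'"
  unfolding quad_def esum_def
  apply (rule sum.cong, simp)
  apply (rule arg_cong[where f="\<lambda>x. x^2"])
  apply (rule sum.cong, simp)
  using assms graph_edge by blast

lemma quad_scale: "quad E (\<lambda>w. c * Y w) = c^2 * quad E Y"
proof -
  have "\<And>e. esum (\<lambda>w. c * Y w) e = c * esum Y e" unfolding esum_def by (simp add: sum_distrib_left)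
  then show ?thesis unfolding quad_def by (simp add: power_mult_distrib sum_distrib_left)
qed

lemma nsq_nonneg: "nsq V Y \<ge> 0" unfolding nsq_def by (simp add: sum_nonneg)

lemma cont_quad:
  assumes g: "graph V E"
  shows "continuous_map (product_topology (\<lambda>_. euclideanreal) V) euclideanreal (quad E)"
proof -
  have fE: "finite E" using g graph_finite_E by blast
  have "continuous_map (product_topology (\<lambda>_. euclideanreal) V) euclideanreal (\<lambda>Z. \<Sum>e\<in>E. esum Z e * esum Z e)"
  proof (rule continuous_map_sum[OF fE])
    fix e assume e: "e \<in> E"
    have fe: "finite e" using edge_finite[OF g e] .
    have ev: "e \<subseteq> V" using graph_edge[OF g e] by blast
    have c: "continuous_map (product_topology (\<lambda>_. euclideanreal) V) euclideanreal (\<lambda>Z. esum Z e)"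
      unfolding esum_def
      apply (rule continuous_map_sum[OF fe])
      using ev continuous_map_product_projection by (metis subsetD)
    show "continuous_map (product_topology (\<lambda>_. euclideanreal) V) euclideanreal (\<lambda>Z. esum Z e * esum Z e)"
      by (rule continuous_map_real_mult[OF c c])
  qed
  then show ?thesis unfolding quad_def by (simp add: power2_eq_square)
qed

lemma cont_nsq:
  assumes fV: "finite V"
  shows "continuous_map (product_topology (\<lambda>_. euclideanreal) V) euclideanreal (nsq V)"
proof -
  have "continuous_map (product_topology (\<lambda>_. euclideanreal) V) euclideanreal (\<lambda>Z. \<Sum>v\<in>V. Z v * Z v)"
    apply (rule continuous_map_sum[OF fV])
    by (rule continuous_map_real_mult; rule continuous_map_product_projection; simp)
  then show ?thesis unfolding nsq_def by (simp add: power2_eq_square)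
qed

lemma maximizer:
  assumes g: "graph V E" and ne: "V \<noteq> {}"
  shows "\<exists>Z. (\<forall>w. w \<notin> V \<longrightarrow> Z w = 0) \<and> nsq V Z = 1 \<and> (\<forall>Y. quad E Y \<le> quad E Z * nsq V Y)"
proof -
  have fV: "finite V" using g graph_def by blast
  let ?T = "product_topology (\<lambda>_. euclideanreal) V"
  let ?P = "PiE V (\<lambda>_. {-1..1::real})"
  let ?K = "{Z \<in> topspace ?T. nsq V Z \<in> {1}} \<inter> ?P"
  have cP: "compactin ?T ?P" by (simp add: compactin_PiE)
  have cl: "closedin ?T {Z \<in> topspace ?T. nsq V Z \<in> {1}}"
    by (rule closedin_continuous_map_preimage[OF cont_nsq[OF fV]]) simp
  have cK: "compactin ?T ?K" by (rule closed_Int_compactin[OF cl cP])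
  have cI: "compact (quad E ` ?K)"
    using image_compactin[OF cK cont_quad[OF g]] by simp
  obtain v0 where v0: "v0 \<in> V" using ne by blast
  let ?Z0 = "restrict (\<lambda>w. if w = v0 then 1 else 0::real) V"
  have "nsq V ?Z0 = (\<Sum>w\<in>V. if w = v0 then 1 else 0)" unfolding nsq_def
    by (rule sum.cong) auto
  also have "\<dots> = 1" using fV v0 by simp
  finally have n0: "nsq V ?Z0 = 1" .
  have "?Z0 \<in> ?P" by auto
  then have "?Z0 \<in> ?K" using n0 by simp
  then have "quad E ` ?K \<noteq> {}" by blast
  from compact_attains_sup[OF cI this] obtain Zm where Zm: "Zm \<in> ?K"
     and mx: "\<And>Y. Y \<in> ?K \<Longrightarrow> quad E Y \<le> quad E Zm" by auto
  define Z where "Z = (\<lambda>w. if w \<in> V then Zm w else 0)"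
  have qZ: "quad E Z = quad E Zm" by (rule quad_cong[OF g]) (simp add: Z_def)
  have nZ: "nsq V Z = 1" using Zm unfolding nsq_def Z_def by simp
  have bound: "quad E Y \<le> quad E Z * nsq V Y" for Y
  proof (cases "nsq V Y = 0")
    case True
    then have "\<forall>w\<in>V. Y w = 0" unfolding nsq_def using fV
      by (simp add: sum_nonneg_eq_0_iff)
    then have "quad E Y = quad E (\<lambda>w. 0 * Y w)" by (intro quad_cong[OF g]) auto
    moreover have "quad E (\<lambda>w. 0 * Y w) = 0" unfolding quad_def esum_def by simp
    ultimately show ?thesis using True by simp
  next
    case False
    define N where "N = nsq V Y"
    have Np: "N > 0" using False nsq_nonneg[of V Y] N_def by linarith
    define W where "W = restrict (\<lambda>w. (1 / sqrt N) * Y w) V"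
    have nW: "nsq V W = 1"
    proof -
      have "nsq V W = (\<Sum>v\<in>V. (1/sqrt N)^2 * (Y v)^2)"
        unfolding nsq_def W_def by (rule sum.cong) (auto simp: power_divide)
      also have "\<dots> = (1/sqrt N)^2 * N" unfolding N_def nsq_def by (simp add: sum_distrib_left)
      also have "\<dots> = 1" using Np by (simp add: power_divide)
      finally show ?thesis .
    qed
    have Wb: "W w \<in> {-1..1}" if "w \<in> V" for w
    proof -
      have "(Y w)^2 \<le> N" unfolding N_def nsq_def
        using member_le_sum[of w V "\<lambda>v. (Y v)^2"] that fV by simp
      then have "\<bar>Y w\<bar> \<le> sqrt N" by (metis real_sqrt_abs real_sqrt_le_mono)
      then have "\<bar>Y w\<bar> / sqrt N \<le> 1" using Np by (simp add: divide_le_eq)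
      then have "\<bar>Y w / sqrt N\<bar> \<le> 1" using Np by (simp add: abs_divide)
      then have "-1 \<le> Y w / sqrt N \<and> Y w / sqrt N \<le> 1" using abs_le_iff[of "Y w / sqrt N" 1] by linarith
      then show ?thesis unfolding W_def using that by simp
    qed
    have "W \<in> ?K" using nW Wb unfolding W_def by auto
    then have "quad E W \<le> quad E Zm" by (rule mx)
    moreover have "quad E W = (1/sqrt N)^2 * quad E Y"
      by (subst quad_scale[symmetric]) (rule quad_cong[OF g], simp add: W_def)
    ultimately have "(1/sqrt N)^2 * quad E Y \<le> quad E Z" using qZ by simp
    then have "quad E Y / N \<le> quad E Z" using Np by (simp add: power_divide)
    then show ?thesis using Np N_def by (simp add: divide_le_eq mult.commute)
  qed
  show ?thesis by (rule exI[of _ Z]) (use nZ bound in \<open>auto simp: Z_def\<close>)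
qed

lemma esum_pert:
  assumes "finite e"
  shows "esum (\<lambda>w. X w + t * (if w = v then 1 else 0)) e = esum X e + t * (if v \<in> e then 1 else 0)"
  unfolding esum_def using assms by (simp add: sum.distrib sum_distrib_left[symmetric])

lemma quad_pert:
  assumes g: "graph V E"
  shows "quad E (\<lambda>w. X w + t * (if w = v then 1 else 0)) =
         quad E X + 2 * t * QE E X v + t^2 * real (card {e\<in>E. v \<in> e})"
proof -
  have fE: "finite E" using g graph_finite_E by blast
  have "quad E (\<lambda>w. X w + t * (if w = v then 1 else 0)) =
        (\<Sum>e\<in>E. (esum X e + t * (if v \<in> e then 1 else 0))^2)"
    unfolding quad_def by (rule sum.cong) (simp_all add: esum_pert edge_finite[OF g])
  also have "\<dots> = (\<Sum>e\<in>E. (esum X e)^2 + 2 * t * (if v \<in> e then esum X e else 0) + t^2 * (if v \<in> e then 1 else 0))"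
    by (rule sum.cong) (auto simp: power2_eq_square algebra_simps)
  also have "\<dots> = quad E X + 2 * t * (\<Sum>e\<in>E. if v \<in> e then esum X e else 0) + t^2 * (\<Sum>e\<in>E. if v \<in> e then 1 else 0)"
    unfolding quad_def by (simp add: sum.distrib sum_distrib_left)
  also have "(\<Sum>e\<in>E. if v \<in> e then esum X e else 0) = QE E X v"
    unfolding QE_def using sum.inter_filter[OF fE, of "esum X" "\<lambda>e. v \<in> e"] by simp
  also have "(\<Sum>e\<in>E. if v \<in> e then 1 else (0::real)) = real (card {e\<in>E. v \<in> e})"
    using sum.inter_filter[OF fE, of "\<lambda>_. 1::real" "\<lambda>e. v \<in> e"] by simp
  finally show ?thesis .
qed

lemma nsq_pert:
  assumes fV: "finite V" and v: "v \<in> V"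
  shows "nsq V (\<lambda>w. X w + t * (if w = v then 1 else 0)) = nsq V X + 2 * t * X v + t^2"
proof -
  have "nsq V (\<lambda>w. X w + t * (if w = v then 1 else 0)) =
        (\<Sum>w\<in>V. (X w)^2 + (if w = v then 2 * t * X v + t^2 else 0))"
    unfolding nsq_def by (rule sum.cong) (auto simp: power2_eq_square algebra_simps)
  also have "\<dots> = nsq V X + 2 * t * X v + t^2"
    unfolding nsq_def using fV v by (simp add: sum.distrib)
  finally show ?thesis .
qed

lemma pert_zero:
  fixes a c :: real
  assumes h: "\<And>t. 2 * t * c + t^2 * a \<le> 0"
  shows "c = 0"
proof (rule ccontr)
  assume c: "c \<noteq> 0"
  define K where "K = \<bar>a\<bar> + 1"
  have K: "K > 0" unfolding K_def by simp
  have eq: "2 * (c / K) * c + (c / K)^2 * a = c^2 / K^2 * (2 * K + a)"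
    using K by (simp add: field_simps power2_eq_square)
  have p1: "2 * K + a > 0" unfolding K_def by (auto simp: abs_if)
  have p2: "c^2 / K^2 > 0" using c K by simp
  have "c^2 / K^2 * (2 * K + a) > 0" by (rule mult_pos_pos[OF p2 p1])
  then have "2 * (c / K) * c + (c / K)^2 * a > 0" by (subst eq)
  with h[of "c / K"] show False by linarith
qed

lemma perturb:
  assumes g: "graph V E" and v: "v \<in> V"
    and bd: "\<And>Z. quad E Z \<le> L * nsq V Z" and eq: "quad E X = L * nsq V X"
  shows "QE E X v = L * X v"
proof -
  have fV: "finite V" using g graph_def by blast
  define D where "D = real (card {e\<in>E. v \<in> e})"
  have "2 * t * (QE E X v - L * X v) + t^2 * (D - L) \<le> 0" for t
  proof -
    have "quad E (\<lambda>w. X w + t * (if w = v then 1 else 0)) \<le> L * nsq V (\<lambda>w. X w + t * (if w = v then 1 else 0))"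
      by (rule bd)
    then have "quad E X + 2 * t * QE E X v + t^2 * D \<le> L * (nsq V X + 2 * t * X v + t^2)"
      unfolding quad_pert[OF g] nsq_pert[OF fV v] D_def .
    then show ?thesis using eq by (simp add: algebra_simps)
  qed
  then have "QE E X v - L * X v = 0" by (rule pert_zero)
  then show ?thesis by simp
qed

lemma eig_quad:
  assumes g: "graph V E" and ev: "is_Q_eigvec V E mu Y"
  shows "quad E Y = mu * nsq V Y"
proof -
  have "quad E Y = (\<Sum>v\<in>V. Y v * QE E Y v)" using inner_QE[OF g] quad_quadB by metis
  also have "\<dots> = (\<Sum>v\<in>V. Y v * (mu * Y v))"
    apply (rule sum.cong, simp)
    using ev Qmul_QE[OF g] unfolding is_Q_eigvec_def by metis
  also have "\<dots> = mu * nsq V Y" unfolding nsq_def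
    by (simp add: sum_distrib_left power2_eq_square algebra_simps)
  finally show ?thesis .
qed

lemma eig_nsq_pos:
  assumes fV: "finite V" and ev: "is_Q_eigvec V E mu Y"
  shows "nsq V Y > 0"
proof -
  obtain v where "v \<in> V" "Y v \<noteq> 0" using ev unfolding is_Q_eigvec_def by blast
  then have "nsq V Y \<noteq> 0" unfolding nsq_def using fV by (auto simp: sum_nonneg_eq_0_iff)
  then show ?thesis using nsq_nonneg[of V Y] by linarith
qed

lemma eig_orth:
  assumes g: "graph V E" and e1: "is_Q_eigvec V E mu Y" and e2: "is_Q_eigvec V E nu Z"
    and ne: "mu \<noteq> nu"
  shows "(\<Sum>v\<in>V. Y v * Z v) = 0"
proof -
  have "(\<Sum>v\<in>V. Y v * QE E Z v) = (\<Sum>v\<in>V. Y v * (nu * Z v))"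
    apply (rule sum.cong, simp)
    using e2 Qmul_QE[OF g] unfolding is_Q_eigvec_def by metis
  moreover have "(\<Sum>v\<in>V. Z v * QE E Y v) = (\<Sum>v\<in>V. Z v * (mu * Y v))"
    apply (rule sum.cong, simp)
    using e1 Qmul_QE[OF g] unfolding is_Q_eigvec_def by metis
  moreover have "quadB E Y Z = quadB E Z Y" unfolding quadB_def by (simp add: mult.commute)
  ultimately have "nu * (\<Sum>v\<in>V. Y v * Z v) = mu * (\<Sum>v\<in>V. Y v * Z v)"
    using inner_QE[OF g, of Y Z] inner_QE[OF g, of Z Y]
    by (simp add: sum_distrib_left algebra_simps)
  then show ?thesis using ne by simp
qed

lemma eig_scale:
  assumes ev: "is_Q_eigvec V E mu Y" and c: "c \<noteq> 0"
  shows "is_Q_eigvec V E mu (\<lambda>w. c * Y w)"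
proof -
  have "Qmul E (\<lambda>w. c * Y w) v = c * Qmul E Y v" for v
    unfolding Qmul_def by (simp add: sum_distrib_left algebra_simps)
  then show ?thesis using ev c unfolding is_Q_eigvec_def by auto
qed

lemma bessel:
  fixes Y :: "'i \<Rightarrow> 'a \<Rightarrow> real"
  assumes fV: "finite V" and fG: "finite G" and w: "w \<in> V"
    and on: "\<And>i j. i \<in> G \<Longrightarrow> j \<in> G \<Longrightarrow> (\<Sum>x\<in>V. Y i x * Y j x) = (if i = j then 1 else 0)"
  shows "(\<Sum>i\<in>G. (Y i w)^2) \<le> 1"
proof -
  define c where "c i = Y i w" for i
  define S where "S x = (\<Sum>i\<in>G. c i * Y i x)" for x
  define d where "d x = (if x = w then 1 else (0::real))" for x
  have "0 \<le> (\<Sum>x\<in>V. (d x - S x)^2)" by (simp add: sum_nonneg)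
  also have "\<dots> = (\<Sum>x\<in>V. (d x)^2) - 2 * (\<Sum>x\<in>V. d x * S x) + (\<Sum>x\<in>V. S x * S x)"
    by (simp add: power2_eq_square algebra_simps sum.distrib sum_subtractf sum_distrib_left)
  also have "(\<Sum>x\<in>V. (d x)^2) = 1" unfolding d_def using fV w
    by (simp add: if_distrib[of "\<lambda>x. x^2"] cong: if_cong)
  also have "(\<Sum>x\<in>V. d x * S x) = S w" unfolding d_def using fV w
    by (simp add: if_distrib[of "\<lambda>x. x * S _"] cong: if_cong)
  also have "S w = (\<Sum>i\<in>G. (c i)^2)" unfolding S_def c_def by (simp add: power2_eq_square)
  also have "(\<Sum>x\<in>V. S x * S x) = (\<Sum>x\<in>V. \<Sum>i\<in>G. \<Sum>j\<in>G. c i * c j * (Y i x * Y j x))"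
    unfolding S_def by (simp add: sum_product algebra_simps)
  also have "\<dots> = (\<Sum>i\<in>G. \<Sum>j\<in>G. c i * c j * (\<Sum>x\<in>V. Y i x * Y j x))"
    by (simp add: sum.swap[of _ V] sum_distrib_left)
  also have "\<dots> = (\<Sum>i\<in>G. \<Sum>j\<in>G. c i * c j * (if i = j then 1 else 0))"
    using on by (intro sum.cong) auto
  also have "\<dots> = (\<Sum>i\<in>G. (c i)^2)"
    using fG by (simp add: power2_eq_square if_distrib[of "\<lambda>x. _ * x"] cong: if_cong)
  finally show ?thesis unfolding c_def by simp
qed

lemma eigs_finite:
  assumes g: "graph V E"
  shows "finite (Q_eigenvalues V E)"
proof -
  have fV: "finite V" using g graph_def by blast
  have "card G \<le> card V" if G: "G \<subseteq> Q_eigenvalues V E" "finite G" for G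
  proof -
    have "\<forall>mu\<in>G. \<exists>Y. is_Q_eigvec V E mu Y \<and> nsq V Y = 1"
    proof
      fix mu assume "mu \<in> G"
      then obtain Y where ev: "is_Q_eigvec V E mu Y" using G unfolding Q_eigenvalues_def by blast
      define N where "N = nsq V Y"
      have Np: "N > 0" using eig_nsq_pos[OF fV ev] N_def by simp
      have "is_Q_eigvec V E mu (\<lambda>w. (1 / sqrt N) * Y w)"
        by (rule eig_scale[OF ev]) (use Np in simp)
      moreover have "nsq V (\<lambda>w. (1 / sqrt N) * Y w) = 1"
      proof -
        have "nsq V (\<lambda>w. (1 / sqrt N) * Y w) = (\<Sum>v\<in>V. (1/sqrt N)^2 * (Y v)^2)"
          unfolding nsq_def by (rule sum.cong) (auto simp: power_divide)
        also have "\<dots> = (1/sqrt N)^2 * N" unfolding N_def nsq_def by (simp add: sum_distrib_left)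
        finally have "nsq V (\<lambda>w. (1 / sqrt N) * Y w) = (1/sqrt N)^2 * N" .
        then show ?thesis using Np by (simp add: power_divide)
      qed
      ultimately show "\<exists>Y. is_Q_eigvec V E mu Y \<and> nsq V Y = 1" by blast
    qed
    then obtain Y where Y: "\<And>mu. mu \<in> G \<Longrightarrow> is_Q_eigvec V E mu (Y mu) \<and> nsq V (Y mu) = 1"
      by metis
    have on: "(\<Sum>x\<in>V. Y i x * Y j x) = (if i = j then 1 else 0)" if "i \<in> G" "j \<in> G" for i j
    proof (cases "i = j")
      case True then show ?thesis using Y[OF that(1)] unfolding nsq_def by (simp add: power2_eq_square)
    next
      case False then show ?thesis using eig_orth[OF g _ _ False] Y that by simp
    qed
    have "real (card G) = (\<Sum>i\<in>G. nsq V (Y i))" using Y by simp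
    also have "\<dots> = (\<Sum>x\<in>V. \<Sum>i\<in>G. (Y i x)^2)" unfolding nsq_def by (rule sum.swap)
    also have "\<dots> \<le> (\<Sum>x\<in>V. 1)"
      by (rule sum_mono) (rule bessel[OF fV G(2) _ on])
    also have "\<dots> = real (card V)" by simp
    finally show ?thesis by simp
  qed
  then show ?thesis using finite_if_finite_subsets_card_bdd by blast
qed

lemma RB:
  assumes g: "graph V E" and ne: "V \<noteq> {}"
  shows "quad E Y \<le> qQ V E * nsq V Y"
proof -
  have fV: "finite V" using g graph_def by blast
  obtain Z where Z0: "\<forall>w. w \<notin> V \<longrightarrow> Z w = 0" and Z1: "nsq V Z = 1"
    and bd: "\<And>Y. quad E Y \<le> quad E Z * nsq V Y"
    using maximizer[OF g ne] by blast
  define L where "L = quad E Z"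
  have eqv: "QE E Z v = L * Z v" if "v \<in> V" for v
    by (rule perturb[OF g that]) (use bd Z1 L_def in auto)
  have "\<exists>v\<in>V. Z v \<noteq> 0"
  proof (rule ccontr)
    assume "\<not> ?thesis"
    then have "nsq V Z = 0" unfolding nsq_def by simp
    then show False using Z1 by simp
  qed
  then have "is_Q_eigvec V E L Z" unfolding is_Q_eigvec_def
    using Z0 eqv Qmul_QE[OF g] by auto
  then have Lin: "L \<in> Q_eigenvalues V E" unfolding Q_eigenvalues_def by blast
  have "mu \<le> L" if mu: "mu \<in> Q_eigenvalues V E" for mu
  proof -
    obtain W where ev: "is_Q_eigvec V E mu W" using mu unfolding Q_eigenvalues_def by blast
    have "mu * nsq V W \<le> L * nsq V W" using eig_quad[OF g ev] bd[of W] L_def by simp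
    then show ?thesis using eig_nsq_pos[OF fV ev] by simp
  qed
  then have "qQ V E = L" unfolding qQ_def using Lin eigs_finite[OF g] by (intro Max_eqI) auto
  then show ?thesis using bd L_def by simp
qed

lemma mn_ge:
  assumes fE: "finite E" and mt: "matching E M"
  shows "card M \<le> matching_number E"
proof -
  have "{card M |M. matching E M} \<subseteq> {..card E}"
    using fE by (auto simp: matching_def intro: card_mono)
  then have "finite {card M |M. matching E M}" using finite_subset by blast
  then show ?thesis unfolding matching_number_def using mt by (intro Max_ge) auto
qed

lemma mn_attained:
  assumes fE: "finite E"
  shows "\<exists>M. matching E M \<and> card M = matching_number E"
proof -
  have "{card M |M. matching E M} \<subseteq> {..card E}"
    using fE by (auto simp: matching_def intro: card_mono)
  then have "finite {card M |M. matching E M}" using finite_subset by blast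
  moreover have "matching E {}" by (simp add: matching_def)
  then have "{card M |M. matching E M} \<noteq> {}" by blast
  ultimately have "matching_number E \<in> {card M |M. matching E M}"
    unfolding matching_number_def by (rule Max_in)
  then show ?thesis by auto
qed

lemma pair_esum: "x \<noteq> y \<Longrightarrow> esum X {x, y} = X x + X y"
  by (simp add: esum_def)

lemma SW_card:
  assumes "finite F" "e \<in> F" "f \<notin> F"
  shows "card (insert f (F - {e})) = card F"
proof -
  have "card F > 0" using assms card_gt_0_iff by blast
  then show ?thesis using assms by (simp add: card_Suc_Diff1)
qed

lemma SW_quad:
  assumes "finite F" "e \<in> F" "f \<notin> F"
  shows "quad (insert f (F - {e})) X = quad F X - (esum X e)^2 + (esum X f)^2"
  using assms unfolding quad_def by (simp add: sum_diff1)

lemma DS_card: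
  assumes "finite F" "e1 \<in> F" "e2 \<in> F" "e1 \<noteq> e2" "f1 \<notin> F" "f2 \<notin> F" "f1 \<noteq> f2"
  shows "card (insert f2 (insert f1 (F - {e1} - {e2}))) = card F"
proof -
  have "card (F - {e1} - {e2}) = card F - 2" using assms by (simp add: card_Diff_singleton)
  moreover have "card F \<ge> 2"
  proof -
    have "{e1, e2} \<subseteq> F" using assms by auto
    then have "card {e1, e2} \<le> card F" using assms(1) card_mono by blast
    then show ?thesis using assms(4) by simp
  qed
  ultimately show ?thesis using assms by simp
qed

lemma DS_quad:
  assumes "finite F" "e1 \<in> F" "e2 \<in> F" "e1 \<noteq> e2" "f1 \<notin> F" "f2 \<notin> F" "f1 \<noteq> f2"
  shows "quad (insert f2 (insert f1 (F - {e1} - {e2}))) X =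
         quad F X - (esum X e1)^2 - (esum X e2)^2 + (esum X f1)^2 + (esum X f2)^2"
proof -
  let ?g = "\<lambda>e. (esum X e)^2"
  have fin: "finite (F - {e1} - {e2})" using assms(1) by simp
  have n1: "f1 \<notin> F - {e1} - {e2}" using assms by simp
  have n2: "f2 \<notin> insert f1 (F - {e1} - {e2})" using assms by simp
  have s1: "sum ?g (insert f2 (insert f1 (F - {e1} - {e2}))) = ?g f2 + sum ?g (insert f1 (F - {e1} - {e2}))"
    by (rule sum.insert) (use fin n2 in auto)
  have s2: "sum ?g (insert f1 (F - {e1} - {e2})) = ?g f1 + sum ?g (F - {e1} - {e2})"
    by (rule sum.insert[OF fin n1])
  have "sum ?g (insert f2 (insert f1 (F - {e1} - {e2}))) = ?g f2 + (?g f1 + sum ?g (F - {e1} - {e2}))"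
    using s1 s2 by simp
  moreover have "sum ?g F = ?g e1 + sum ?g (F - {e1})" by (rule sum.remove[OF assms(1,2)])
  moreover have "sum ?g (F - {e1}) = ?g e2 + sum ?g (F - {e1} - {e2})"
    by (rule sum.remove) (use assms in auto)
  ultimately show ?thesis unfolding quad_def by simp
qed

lemma notinM:
  assumes "matching E M" "e0 \<in> M" "x \<in> e0" "y \<notin> e0"
  shows "{x, y} \<notin> M"
  using assms unfolding matching_def by blast

lemma DS_matching:
  assumes mt: "matching F M" and ab: "{A, B} \<in> M" and cd: "{C, D} \<in> M"
    and dist: "A \<noteq> B" "A \<noteq> C" "A \<noteq> D" "B \<noteq> C" "B \<noteq> D" "C \<noteq> D"
    and sub: "insert {B, D} (insert {A, C} (M - {{A, B}} - {{C, D}})) \<subseteq> F'"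
  shows "matching F' (insert {B, D} (insert {A, C} (M - {{A, B}} - {{C, D}})))"
proof -
  have h: "A \<notin> e \<and> B \<notin> e \<and> C \<notin> e \<and> D \<notin> e" if "e \<in> M - {{A, B}} - {{C, D}}" for e
  proof -
    have "e \<inter> {A, B} = {}" "e \<inter> {C, D} = {}" using that mt ab cd unfolding matching_def by auto
    then show ?thesis by auto
  qed
  show ?thesis unfolding matching_def
  proof (intro conjI ballI impI sub)
    fix e1 e2 assume e1: "e1 \<in> insert {B, D} (insert {A, C} (M - {{A, B}} - {{C, D}}))"
      and e2: "e2 \<in> insert {B, D} (insert {A, C} (M - {{A, B}} - {{C, D}}))" and ne: "e1 \<noteq> e2"
    show "e1 \<inter> e2 = {}"
    proof -
      consider "e1 = {B, D}" | "e1 = {A, C}" | "e1 \<in> M - {{A, B}} - {{C, D}}" using e1 by blast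
      then show ?thesis
      proof cases
        case 1 then show ?thesis using e2 ne h dist by auto
      next
        case 2 then show ?thesis using e2 ne h dist by auto
      next
        case 3
        consider "e2 = {B, D}" | "e2 = {A, C}" | "e2 \<in> M - {{A, B}} - {{C, D}}" using e2 by blast
        then show ?thesis
        proof cases
          case 1 then show ?thesis using 3 h by auto
        next
          case 2 then show ?thesis using 3 h by auto
        next
          case 4: 3 then show ?thesis using 3 ne mt unfolding matching_def by auto
        qed
      qed
    qed
  qed
qed

lemma graph_SW:
  assumes "graph V F" "f \<subseteq> V" "card f = 2"
  shows "graph V (insert f (F - {e}))"
  using assms unfolding graph_def by auto

lemma graph_DS:
  assumes "graph V F" "f1 \<subseteq> V" "card f1 = 2" "f2 \<subseteq> V" "card f2 = 2"
  shows "graph V (insert f2 (insert f1 (F - {e1} - {e2})))"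
  using assms unfolding graph_def by auto

lemma transport:
  fixes V :: "'a set" and E' :: "'a set set" and V0 :: "'b set"
  assumes fam: "in_family m \<beta> V E'" and ext: "q_extremal m \<beta> V0 E0" and ne: "V \<noteq> {}"
  shows "quad E' Z \<le> qQ V0 E0 * nsq V Z"
proof -
  have g: "graph V E'" using fam in_family_def by blast
  have fV: "finite V" using g graph_def by blast
  have fE: "finite E'" using g graph_finite_E by blast
  obtain f :: "'a \<Rightarrow> nat" and n where "f ` V = {i. i < n}" and inj: "inj_on f V"
    using finite_imp_inj_to_nat_seg[OF fV] by blast
  define V' where "V' = f ` V"
  define E'' where "E'' = (`) f ` E'"
  define g' where "g' = inv_into V f"
  have EP: "E' \<subseteq> Pow V" using g graph_edge by blast
  have injE: "inj_on ((`) f) E'" using inj_on_subset[OF inj_on_image_Pow[OF inj] EP] .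
  have injE2: "inj_on f e" if "e \<in> E'" for e using inj EP that inj_on_subset by blast
  have gV': "graph V' E''"
    unfolding graph_def V'_def E''_def
  proof (intro conjI ballI)
    show "finite (f ` V)" using fV by simp
    fix e' assume "e' \<in> (`) f ` E'"
    then obtain e where e: "e \<in> E'" "e' = f ` e" by blast
    show "e' \<subseteq> f ` V" using e EP by auto
    show "card e' = 2" using e card_image[OF injE2[OF e(1)]] graph_edge[OF g e(1)] by simp
  qed
  have cE: "card E'' = card E'" unfolding E''_def using card_image[OF injE] .
  obtain M0 where M0: "matching E' M0" "card M0 = matching_number E'" using mn_attained[OF fE] by blast
  have M0E: "M0 \<subseteq> E'" using M0 matching_def by blast
  have mt: "matching E'' ((`) f ` M0)"
    unfolding matching_def E''_def
  proof (intro conjI ballI impI)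
    show "(`) f ` M0 \<subseteq> (`) f ` E'" using M0E by blast
    fix e1 e2 assume "e1 \<in> (`) f ` M0" "e2 \<in> (`) f ` M0" "e1 \<noteq> e2"
    then obtain d1 d2 where d: "d1 \<in> M0" "d2 \<in> M0" "e1 = f ` d1" "e2 = f ` d2" "d1 \<noteq> d2" by blast
    have "d1 \<inter> d2 = {}" using M0(1) d(1,2,5) unfolding matching_def by blast
    moreover have "d1 \<subseteq> V" "d2 \<subseteq> V" using d M0E EP by auto
    ultimately show "e1 \<inter> e2 = {}" using d inj_on_image_Int[OF inj] by (metis image_empty)
  qed
  have "card ((`) f ` M0) = card M0" using card_image inj_on_subset[OF injE M0E] by blast
  moreover have "finite E''" unfolding E''_def using fE by simp
  ultimately have "matching_number E' \<le> matching_number E''" using mn_ge mt M0 by metis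
  then have fam'': "in_family m \<beta> V' E''" using fam gV' cE unfolding in_family_def by auto
  then have qle: "qQ V' E'' \<le> qQ V0 E0" using ext unfolding q_extremal_def by blast
  have ne': "V' \<noteq> {}" using ne V'_def by simp
  have rb: "quad E'' (\<lambda>x. Z (g' x)) \<le> qQ V' E'' * nsq V' (\<lambda>x. Z (g' x))" by (rule RB[OF gV' ne'])
  have gf: "g' (f w) = w" if "w \<in> V" for w using inv_into_f_f[OF inj that] g'_def by simp
  have "quad E'' (\<lambda>x. Z (g' x)) = (\<Sum>e\<in>E'. (esum (\<lambda>x. Z (g' x)) (f ` e))^2)"
    unfolding quad_def E''_def using sum.reindex[OF injE] by (simp add: comp_def)
  also have "\<dots> = (\<Sum>e\<in>E'. (esum Z e)^2)"
  proof (rule sum.cong)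
    fix e assume e: "e \<in> E'"
    have "esum (\<lambda>x. Z (g' x)) (f ` e) = (\<Sum>w\<in>e. Z (g' (f w)))"
      unfolding esum_def using sum.reindex[OF injE2[OF e]] by (simp add: comp_def)
    also have "\<dots> = esum Z e" unfolding esum_def
    proof (rule sum.cong)
      fix x assume "x \<in> e"
      then have "x \<in> V" using e EP by blast
      then show "Z (g' (f x)) = Z x" using gf by simp
    qed simp
    finally show "(esum (\<lambda>x. Z (g' x)) (f ` e))^2 = (esum Z e)^2" by simp
  qed simp
  finally have q1: "quad E'' (\<lambda>x. Z (g' x)) = quad E' Z" unfolding quad_def .
  have "nsq V' (\<lambda>x. Z (g' x)) = (\<Sum>w\<in>V. (Z (g' (f w)))^2)"
    unfolding nsq_def V'_def using sum.reindex[OF inj] by (simp add: comp_def)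
  also have "\<dots> = nsq V Z" unfolding nsq_def using gf by (intro sum.cong) auto
  finally have n1: "nsq V' (\<lambda>x. Z (g' x)) = nsq V Z" .
  have "quad E' Z \<le> qQ V' E'' * nsq V Z" using rb q1 n1 by simp
  also have "\<dots> \<le> qQ V0 E0 * nsq V Z" using qle nsq_nonneg[of V Z] by (rule mult_right_mono)
  finally show ?thesis .
qed

lemma QE_switch:
  assumes "finite F" "f \<notin> F" "w \<in> f" "w \<notin> e"
  shows "QE (insert f (F - {e})) X w = QE F X w + esum X f"
proof -
  have "{x \<in> insert f (F - {e}). w \<in> x} = insert f {x \<in> F. w \<in> x}" using assms by auto
  moreover have "f \<notin> {x \<in> F. w \<in> x}" using assms by auto
  ultimately show ?thesis unfolding QE_def using assms by simp
qed

lemma chain: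
  assumes po: "proper_ordering M X k u v" and i: "1 \<le> i" and ij: "i \<le> j" and jk: "j \<le> k"
  shows "X (v j) \<le> X (v i) \<and> (X (v j) = X (v i) \<longrightarrow> X (u j) \<le> X (u i))"
proof -
  have st: "X (v (Suc l)) \<le> X (v l) \<and> (X (v l) = X (v (Suc l)) \<longrightarrow> X (u (Suc l)) \<le> X (u l))"
    if "1 \<le> l" "l < k" for l
  proof -
    have p4: "\<forall>i\<in>{1..<k}. X (v i) \<ge> X (v (Suc i))"
      and p5: "\<forall>i\<in>{1..<k}. X (v i) = X (v (Suc i)) \<longrightarrow> X (u i) \<ge> X (u (Suc i))"
      using po unfolding proper_ordering_def by blast+
    have "l \<in> {1..<k}" using that by simp
    then show ?thesis using p4 p5 by blast
  qed
  have "\<forall>n. i + n \<le> k \<longrightarrow> X (v (i + n)) \<le> X (v i) \<and> (X (v (i + n)) = X (v i) \<longrightarrow> X (u (i + n)) \<le> X (u i))"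
  proof
    fix n show "i + n \<le> k \<longrightarrow> X (v (i + n)) \<le> X (v i) \<and> (X (v (i + n)) = X (v i) \<longrightarrow> X (u (i + n)) \<le> X (u i))"
    proof (induction n)
      case 0 then show ?case by simp
    next
      case (Suc n)
      show ?case
      proof
        assume h: "i + Suc n \<le> k"
        then have IH: "X (v (i + n)) \<le> X (v i) \<and> (X (v (i + n)) = X (v i) \<longrightarrow> X (u (i + n)) \<le> X (u i))"
          using Suc by simp
        have s: "X (v (Suc (i + n))) \<le> X (v (i + n)) \<and> (X (v (i + n)) = X (v (Suc (i + n))) \<longrightarrow> X (u (Suc (i + n))) \<le> X (u (i + n)))"
          using st[of "i + n"] i h by simp
        show "X (v (i + Suc n)) \<le> X (v i) \<and> (X (v (i + Suc n)) = X (v i) \<longrightarrow> X (u (i + Suc n)) \<le> X (u i))"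
          using IH s by auto
      qed
    qed
  qed
  then show ?thesis using ij jk by (metis le_add_diff_inverse)
qed

locale xsetting =
  fixes m \<beta> :: nat and V :: "'a set" and E :: "'a set set" and X :: "'a \<Rightarrow> real" and M :: "'a set set"
  assumes ext: "q_extremal m \<beta> V E" and pe: "principal_eigvec V E X" and em: "extremal_matching E X M"
begin

lemma fam: "in_family m \<beta> V E" using ext unfolding q_extremal_def by blast
lemma g: "graph V E" using fam unfolding in_family_def by blast
lemma fV: "finite V" using g graph_def by blast
lemma fE: "finite E" using g graph_finite_E by blast
lemma cardE: "card E = m" using fam unfolding in_family_def by blast
lemma mnE: "matching_number E \<ge> \<beta>" using fam unfolding in_family_def by blast
lemma ev: "is_Q_eigvec V E (qQ V E) X" using pe unfolding principal_eigvec_def by blast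
lemma Xnn: "v \<in> V \<Longrightarrow> X v \<ge> 0" using pe unfolding principal_eigvec_def by blast
lemma nX: "nsq V X = 1" using pe unfolding principal_eigvec_def nsq_def by blast
lemma Vne: "V \<noteq> {}" using ev unfolding is_Q_eigvec_def by blast
lemma quadX: "quad E X = qQ V E" using eig_quad[OF g ev] nX by simp
lemma QEX: "v \<in> V \<Longrightarrow> QE E X v = qQ V E * X v"
  using ev Qmul_QE[OF g] unfolding is_Q_eigvec_def by metis
lemma key_le: "in_family m \<beta> V E' \<Longrightarrow> quad E' X \<le> qQ V E"
  using transport[OF _ ext Vne, of E' X] nX by simp
lemma key_eq:
  assumes f: "in_family m \<beta> V E'" and q: "quad E' X = qQ V E" and v: "v \<in> V"
  shows "QE E' X v = qQ V E * X v"
proof -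
  have g': "graph V E'" using f unfolding in_family_def by blast
  show ?thesis
    by (rule perturb[OF g' v]) (use transport[OF f ext Vne] q nX in auto)
qed
lemma Mmatch: "matching E M" and cardM: "card M = matching_number E"
  using em unfolding extremal_matching_def maximum_matching_def by auto
lemma ME: "M \<subseteq> E" using Mmatch unfolding matching_def by blast
lemma fM: "finite M" using ME fE finite_subset by blast

lemma esum_nn: "e \<subseteq> V \<Longrightarrow> esum X e \<ge> 0"
  unfolding esum_def using Xnn by (meson subsetD sum_nonneg)

lemma ZN:
  assumes zw: "{z, w} \<in> E" and z0: "X z = 0"
  shows "X w = 0"
proof -
  have zV: "z \<in> V" "w \<in> V" using zw graph_edge[OF g] by auto
  have "QE E X z = 0" using QEX[OF zV(1)] z0 by simp
  then have "\<forall>e\<in>{e\<in>E. z \<in> e}. esum X e = 0"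
    unfolding QE_def using fE esum_nn graph_edge[OF g]
    by (subst (asm) sum_nonneg_eq_0_iff) auto
  then have "esum X {z, w} = 0" using zw by auto
  moreover have "z \<noteq> w" using graph_edge[OF g zw] by auto
  ultimately have "X z + X w = 0" by (simp add: pair_esum)
  then show ?thesis using z0 by simp
qed

lemma T_eq:
  assumes e: "e \<in> E" and f: "f \<notin> E" "f \<subseteq> V" "card f = 2"
    and mt: "matching (insert f (E - {e})) M'" and cM: "card M' \<ge> \<beta>"
    and ge: "esum X f \<ge> esum X e"
  shows "esum X f = 0"
proof -
  let ?E' = "insert f (E - {e})"
  have fE': "finite ?E'" using fE by simp
  have fam': "in_family m \<beta> V ?E'"
    unfolding in_family_def
    using graph_SW[OF g f(2,3)] SW_card[OF fE e f(1)] cardE mn_ge[OF fE' mt] cM by auto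
  have se: "esum X e \<ge> 0" using esum_nn graph_edge[OF g e] by blast
  have "(esum X e)^2 \<le> (esum X f)^2" using se ge by (simp add: power_mono)
  then have "quad ?E' X \<ge> qQ V E" using SW_quad[OF fE e f(1)] quadX by simp
  then have qe: "quad ?E' X = qQ V E" using key_le[OF fam'] by simp
  have "\<not> f \<subseteq> e"
  proof
    assume "f \<subseteq> e"
    moreover have "finite e" "card e = 2" using graph_edge[OF g e] edge_finite[OF g e] by auto
    ultimately have "f = e" using f(3) card_subset_eq by metis
    then show False using e f(1) by simp
  qed
  then obtain w where w: "w \<in> f" "w \<notin> e" by blast
  have wV: "w \<in> V" using w f(2) by blast
  have "QE ?E' X w = QE E X w" using key_eq[OF fam' qe wV] QEX[OF wV] by simp
  then show ?thesis using QE_switch[OF fE f(1) w] by simp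
qed

lemma match_sub: "matching F N \<Longrightarrow> N \<subseteq> F' \<Longrightarrow> matching F' N"
  unfolding matching_def by blast

lemma posZ:
  assumes e: "e \<in> E" "e \<notin> M"
  shows "esum X e > 0"
proof (rule ccontr)
  assume "\<not> esum X e > 0"
  moreover have "esum X e \<ge> 0" using esum_nn graph_edge[OF g e(1)] by blast
  ultimately have s0: "esum X e = 0" by simp
  obtain a b where ab: "a \<noteq> b" "e = {a, b}" using graph_edge[OF g e(1)] card2_eq by blast
  have aV: "a \<in> V" "b \<in> V" using graph_edge[OF g e(1)] ab by auto
  have "X a + X b = 0" using s0 ab pair_esum[of a b X] by simp
  moreover have "X a \<ge> 0" "X b \<ge> 0" using Xnn aV by auto
  ultimately have a0: "X a = 0" by linarith
  obtain p where p: "p \<in> V" "X p \<noteq> 0" using ev unfolding is_Q_eigvec_def by blast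
  have pp: "X p > 0" using p Xnn by force
  have ap: "a \<noteq> p" using a0 pp by auto
  have fnot: "{a, p} \<notin> E" using ZN[of a p] a0 pp by auto
  have "matching (insert {a, p} (E - {e})) M"
    by (rule match_sub[OF Mmatch]) (use ME e(2) in auto)
  moreover have "card M \<ge> \<beta>" using cardM mnE by simp
  moreover have "esum X {a, p} \<ge> esum X e" using s0 pair_esum[OF ap] a0 pp by simp
  ultimately have "esum X {a, p} = 0"
    using T_eq[OF e(1) fnot] aV p ap by auto
  then show False using pair_esum[OF ap] a0 pp by simp
qed

lemma T1:
  assumes e: "e \<in> E" "e \<notin> M" and f: "f \<notin> E" "f \<subseteq> V" "card f = 2"
    and ge: "esum X f \<ge> esum X e"
  shows False
proof -
  have "matching (insert f (E - {e})) M"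
    by (rule match_sub[OF Mmatch]) (use ME e(2) in auto)
  moreover have "card M \<ge> \<beta>" using cardM mnE by simp
  ultimately have "esum X f = 0" using T_eq[OF e(1) f _ _ ge] by blast
  then show False using posZ[OF e] ge by simp
qed

end

theorem lemma2p3:
  fixes m \<beta> k i j :: nat and V :: "'a set" and E :: "'a set set"
    and X :: "'a \<Rightarrow> real" and M :: "'a set set" and u v :: "nat \<Rightarrow> 'a"
  assumes "1 \<le> \<beta>" and "\<beta> \<le> m"
    and "q_extremal m \<beta> V E"
    and "principal_eigvec V E X"
    and "extremal_matching E X M"
    and "k = matching_number E"
    and "proper_ordering M X k u v"
    and "k \<ge> 2"
    and "1 \<le> i" and "i < j" and "j \<le> k"
  shows "X (u i) \<ge> X (v j) \<longleftrightarrow>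
           (induced_is_2K2 E {u i, v i, u j, v j} \<or> induced_is_K4 E {u i, v i, u j, v j})"
proof -
  interpret xs: xsetting m \<beta> V E X M using assms(3,4,5) by unfold_locales
  note po = assms(7)
  have kM: "k = card M" using po unfolding proper_ordering_def by (elim conjE) assumption
  have Meq: "M = {{u l, v l} | l. l \<in> {1..k}}" using po unfolding proper_ordering_def by (elim conjE) assumption
  have c1: "\<forall>l\<in>{1..k}. X (v l) \<ge> X (u l)" using po unfolding proper_ordering_def by (elim conjE) assumption
  have Mim: "M = (\<lambda>l. {u l, v l}) ` {1..k}" using Meq by auto
  have inj: "inj_on (\<lambda>l. {u l, v l}) {1..k}"
    by (rule eq_card_imp_inj_on) (use Mim kM in auto)
  have iK: "i \<in> {1..k}" and jK: "j \<in> {1..k}" using assms(9,10,11) by auto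
  have iM: "{u i, v i} \<in> M" and jM: "{u j, v j} \<in> M" using Mim iK jK by auto
  have neij: "{u i, v i} \<noteq> {u j, v j}" using inj_onD[OF inj _ iK jK] assms(10) by auto
  have mm: "\<forall>e1\<in>M. \<forall>e2\<in>M. e1 \<noteq> e2 \<longrightarrow> e1 \<inter> e2 = {}"
    using xs.Mmatch unfolding matching_def by (elim conjE) assumption
  have disj: "{u i, v i} \<inter> {u j, v j} = {}" using mm[rule_format, OF iM jM neij] .
  have iE: "{u i, v i} \<in> E" and jE: "{u j, v j} \<in> E" using iM jM xs.ME by auto
  have ui: "u i \<noteq> v i"
  proof
    assume h: "u i = v i"
    have "card {u i, v i} = 2" using graph_edge[OF xs.g iE] by blast
    then show False using h by simp
  qed
  have uj: "u j \<noteq> v j"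
  proof
    assume h: "u j = v j"
    have "card {u j, v j} = 2" using graph_edge[OF xs.g jE] by blast
    then show False using h by simp
  qed
  define A where "A = v i"
  define B where "B = u i"
  define C where "C = v j"
  define D where "D = u j"
  have dist: "A \<noteq> B" "A \<noteq> C" "A \<noteq> D" "B \<noteq> C" "B \<noteq> D" "C \<noteq> D"
    using ui uj disj unfolding A_def B_def C_def D_def by auto
  have inV: "A \<in> V" "B \<in> V" "C \<in> V" "D \<in> V"
    using graph_edge[OF xs.g iE] graph_edge[OF xs.g jE] unfolding A_def B_def C_def D_def by auto
  define a where "a = X A"
  define b where "b = X B"
  define c where "c = X C"
  define d where "d = X D"
  have nn: "a \<ge> 0" "b \<ge> 0" "c \<ge> 0" "d \<ge> 0" using xs.Xnn inV unfolding a_def b_def c_def d_def by auto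
  have ab: "a \<ge> b" using c1 iK unfolding a_def b_def A_def B_def by auto
  have cd: "c \<ge> d" using c1 jK unfolding c_def d_def C_def D_def by auto
  have ch: "c \<le> a \<and> (c = a \<longrightarrow> d \<le> b)"
    using chain[OF po assms(9) _ assms(11)] assms(10) unfolding a_def b_def c_def d_def A_def B_def C_def D_def
    by simp
  have ABM: "{A, B} \<in> M" using iM unfolding A_def B_def by (simp add: insert_commute)
  have CDM: "{C, D} \<in> M" using jM unfolding C_def D_def by (simp add: insert_commute)
  have ABE: "{A, B} \<in> E" and CDE: "{C, D} \<in> E" using ABM CDM xs.ME by auto
  have BAE: "{B, A} \<in> E" using ABE by (simp add: insert_commute)
  have ABCD: "{A, B} \<noteq> {C, D}" using dist by (auto simp: doubleton_eq_iff)
  have ACBD: "{A, C} \<noteq> {B, D}" using dist by (auto simp: doubleton_eq_iff)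
  have nM: "{A, C} \<notin> M" "{A, D} \<notin> M" "{B, C} \<notin> M" "{B, D} \<notin> M"
    using notinM[OF xs.Mmatch ABM, of A C] notinM[OF xs.Mmatch ABM, of A D]
      notinM[OF xs.Mmatch ABM, of B C] notinM[OF xs.Mmatch ABM, of B D] dist by auto
  have es: "esum X {A, B} = a + b" "esum X {C, D} = c + d" "esum X {A, C} = a + c"
    "esum X {A, D} = a + d" "esum X {B, C} = b + c" "esum X {B, D} = b + d"
    using dist unfolding a_def b_def c_def d_def by (auto simp: pair_esum)
  have sub: "{A, C} \<subseteq> V" "{A, D} \<subseteq> V" "{B, C} \<subseteq> V" "{B, D} \<subseteq> V" using inV by auto
  have c2: "card {A, C} = 2" "card {A, D} = 2" "card {B, C} = 2" "card {B, D} = 2" using dist by auto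
  define S where "S = {u i, v i, u j, v j}"
  have S: "S = {A, B, C, D}" unfolding S_def A_def B_def C_def D_def by auto
  have cS: "card S = 4" using S dist by auto
  have pairs: "e = {A, B} \<or> e = {C, D} \<or> e = {A, C} \<or> e = {A, D} \<or> e = {B, C} \<or> e = {B, D}"
    if eS: "e \<subseteq> S" and ec: "card e = 2" for e
  proof -
    obtain x y where xy: "x \<noteq> y" "e = {x, y}" using card2_eq ec by blast
    have "x \<in> {A, B, C, D}" "y \<in> {A, B, C, D}" using eS xy S by auto
    then have "x = A \<or> x = B \<or> x = C \<or> x = D" "y = A \<or> y = B \<or> y = C \<or> y = D" by auto
    then show ?thesis using xy(1) unfolding xy(2) by (elim disjE; simp add: insert_commute)
  qed
  have I2: "induced_is_2K2 E S \<longleftrightarrow> ({A, C} \<notin> E \<and> {A, D} \<notin> E \<and> {B, C} \<notin> E \<and> {B, D} \<notin> E)"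
  proof
    assume h: "induced_is_2K2 E S"
    then obtain e1 e2 where ie: "induced_edges E S = {e1, e2}" unfolding induced_is_2K2_def by blast
    have "{A, B} \<in> induced_edges E S" "{C, D} \<in> induced_edges E S"
      using ABE CDE S unfolding induced_edges_def by auto
    then have ie2: "induced_edges E S = {{A, B}, {C, D}}" using ie ABCD by auto
    have "f \<notin> E" if "f \<in> {{A, C}, {A, D}, {B, C}, {B, D}}" for f
    proof
      assume "f \<in> E"
      then have "f \<in> induced_edges E S" using that S unfolding induced_edges_def by auto
      then show False using ie2 that dist by (auto simp: doubleton_eq_iff)
    qed
    then show "{A, C} \<notin> E \<and> {A, D} \<notin> E \<and> {B, C} \<notin> E \<and> {B, D} \<notin> E" by auto
  next
    assume h: "{A, C} \<notin> E \<and> {A, D} \<notin> E \<and> {B, C} \<notin> E \<and> {B, D} \<notin> E"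
    have "induced_edges E S = {{A, B}, {C, D}}"
    proof
      show "induced_edges E S \<subseteq> {{A, B}, {C, D}}"
      proof
        fix e assume "e \<in> induced_edges E S"
        then have "e \<in> E" "e \<subseteq> S" unfolding induced_edges_def by auto
        then show "e \<in> {{A, B}, {C, D}}" using pairs[of e] graph_edge[OF xs.g] h by auto
      qed
      show "{{A, B}, {C, D}} \<subseteq> induced_edges E S" using ABE CDE S unfolding induced_edges_def by auto
    qed
    moreover have "{A, B} \<inter> {C, D} = {}" using dist by auto
    ultimately show "induced_is_2K2 E S" unfolding induced_is_2K2_def using cS ABCD by blast
  qed
  have IK: "induced_is_K4 E S \<longleftrightarrow> ({A, C} \<in> E \<and> {A, D} \<in> E \<and> {B, C} \<in> E \<and> {B, D} \<in> E)"
  proof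
    assume "induced_is_K4 E S"
    then have ie: "induced_edges E S = {e. e \<subseteq> S \<and> card e = 2}" unfolding induced_is_K4_def by blast
    have "f \<in> E" if "f \<in> {{A, C}, {A, D}, {B, C}, {B, D}}" for f
    proof -
      have "f \<subseteq> S" "card f = 2" using that S c2 by auto
      then have "f \<in> induced_edges E S" using ie by blast
      then show ?thesis unfolding induced_edges_def by blast
    qed
    then show "{A, C} \<in> E \<and> {A, D} \<in> E \<and> {B, C} \<in> E \<and> {B, D} \<in> E" by auto
  next
    assume h: "{A, C} \<in> E \<and> {A, D} \<in> E \<and> {B, C} \<in> E \<and> {B, D} \<in> E"
    have "induced_edges E S = {e. e \<subseteq> S \<and> card e = 2}"
    proof
      show "induced_edges E S \<subseteq> {e. e \<subseteq> S \<and> card e = 2}"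
        unfolding induced_edges_def using graph_edge[OF xs.g] by auto
      show "{e. e \<subseteq> S \<and> card e = 2} \<subseteq> induced_edges E S"
      proof
        fix e assume "e \<in> {e. e \<subseteq> S \<and> card e = 2}"
        then have "e \<subseteq> S" "card e = 2" by auto
        then show "e \<in> induced_edges E S"
          using pairs[of e] h ABE CDE unfolding induced_edges_def by auto
      qed
    qed
    then show "induced_is_K4 E S" unfolding induced_is_K4_def using cS by blast
  qed
  define M' where "M' = insert {B, D} (insert {A, C} (M - {{A, B}} - {{C, D}}))"
  have cM': "card M' = card M"
    unfolding M'_def by (rule DS_card[OF xs.fM ABM CDM ABCD nM(1) nM(4) ACBD])
  have cMb: "card M \<ge> \<beta>" using xs.cardM xs.mnE by simp
  have mtM': "matching F' M'" if "M' \<subseteq> F'" for F'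
    unfolding M'_def by (rule DS_matching[OF xs.Mmatch ABM CDM dist]) (use that M'_def in simp)
  have wdiff: "(a + c)^2 + (b + d)^2 - (a + b)^2 - (c + d)^2 = 2 * (a - d) * (c - b)"
    by (simp add: power2_eq_square algebra_simps)
  have "b \<ge> c \<longleftrightarrow> (induced_is_2K2 E S \<or> induced_is_K4 E S)"
  proof
    assume bc: "b \<ge> c"
    have T2a: False if acE: "{A, C} \<in> E" and bdE: "{B, D} \<notin> E"
    proof -
      have "M' \<subseteq> insert {B, D} (E - {{C, D}})"
        unfolding M'_def using acE xs.ME dist by (auto simp: doubleton_eq_iff)
      then have mt: "matching (insert {B, D} (E - {{C, D}})) M'" by (rule mtM')
      have "esum X {B, D} = 0"
        by (rule xs.T_eq[OF CDE bdE sub(4) c2(4) mt]) (use cM' cMb es bc in auto)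
      then have "b = 0" using es nn by simp
      then have "a = 0" using xs.ZN[OF BAE] unfolding a_def b_def by simp
      then have "a + c = 0" using ch nn by simp
      moreover have "esum X {A, C} > 0" by (rule xs.posZ[OF acE nM(1)])
      ultimately show False using es by simp
    qed
    show "induced_is_2K2 E S \<or> induced_is_K4 E S"
    proof (cases "{B, D} \<in> E")
      case True
      have "{A, C} \<in> E"
        using xs.T1[OF True nM(4) _ sub(1) c2(1)] es ab cd by force
      moreover have "{A, D} \<in> E"
        using xs.T1[OF True nM(4) _ sub(2) c2(2)] es ab cd by force
      moreover have "{B, C} \<in> E"
        using xs.T1[OF True nM(4) _ sub(3) c2(3)] es ab cd by force
      ultimately show ?thesis using IK True by blast
    next
      case False
      have ac: "{A, C} \<notin> E" using T2a False by blast
      have "{A, D} \<notin> E"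
      proof
        assume h: "{A, D} \<in> E"
        show False by (rule xs.T1[OF h nM(2) ac sub(1) c2(1)]) (use es cd in simp)
      qed
      moreover have "{B, C} \<notin> E"
      proof
        assume h: "{B, C} \<in> E"
        show False by (rule xs.T1[OF h nM(3) ac sub(1) c2(1)]) (use es ab in simp)
      qed
      ultimately show ?thesis using I2 False ac by blast
    qed
  next
    assume rhs: "induced_is_2K2 E S \<or> induced_is_K4 E S"
    show "b \<ge> c"
    proof (rule ccontr)
      assume "\<not> b \<ge> c"
      then have cb: "c > b" by simp
      have ad: "a > d"
      proof (rule ccontr)
        assume "\<not> a > d"
        then have "c = a" using ch cd by simp
        then have "d \<le> b" using ch by simp
        then show False using cb cd ch \<open>\<not> a > d\<close> by linarith
      qed
      have pos: "2 * (a - d) * (c - b) > 0" using ad cb by simp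
      from rhs show False
      proof
        assume "induced_is_2K2 E S"
        then have none: "{A, C} \<notin> E" "{A, D} \<notin> E" "{B, C} \<notin> E" "{B, D} \<notin> E" using I2 by auto
        define E' where "E' = insert {B, D} (insert {A, C} (E - {{A, B}} - {{C, D}}))"
        have fE': "finite E'" unfolding E'_def using xs.fE by simp
        have "M' \<subseteq> E'" unfolding M'_def E'_def using xs.ME by auto
        then have mt: "matching E' M'" by (rule mtM')
        have "in_family m \<beta> V E'"
          unfolding in_family_def
        proof (intro conjI)
          show "graph V E'" unfolding E'_def by (rule graph_DS[OF xs.g sub(1) c2(1) sub(4) c2(4)])
          show "card E' = m" unfolding E'_def
            using DS_card[OF xs.fE ABE CDE ABCD none(1) none(4) ACBD] xs.cardE by simp
          show "\<beta> \<le> matching_number E'" using mn_ge[OF fE' mt] cM' cMb by simp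
        qed
        then have "quad E' X \<le> qQ V E" by (rule xs.key_le)
        moreover have "quad E' X = qQ V E - (a + b)^2 - (c + d)^2 + (a + c)^2 + (b + d)^2"
          unfolding E'_def using DS_quad[OF xs.fE ABE CDE ABCD none(1) none(4) ACBD, of X] xs.quadX es by simp
        ultimately show False using wdiff pos by linarith
      next
        assume "induced_is_K4 E S"
        then have all: "{A, C} \<in> E" "{B, D} \<in> E" using IK by auto
        have "M' \<subseteq> E" unfolding M'_def using xs.ME all by auto
        then have mt: "matching E M'" by (rule mtM')
        then have "maximum_matching E M'" unfolding maximum_matching_def using cM' xs.cardM by simp
        then have "match_weight X M' \<le> match_weight X M" using assms(5) unfolding extremal_matching_def by blast
        moreover have mw: "match_weight X N = quad N X" for N unfolding match_weight_def quad_def esum_def ..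
        moreover have "quad M' X = quad M X - (a + b)^2 - (c + d)^2 + (a + c)^2 + (b + d)^2"
          unfolding M'_def using DS_quad[OF xs.fM ABM CDM ABCD nM(1) nM(4) ACBD, of X] es by simp
        ultimately show False using wdiff pos by simp
      qed
    qed
  qed
  then show ?thesis unfolding S_def b_def c_def B_def C_def .
qed

end
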